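(* Let $\lambda\in\mathbb C$ satisfy $\lambda^2+\lambda+1=0$ (so $\lambda^3=1$, $\lambda\neq1$), and let $G\subset\mathrm{Diff}(\mathbb C^2,0)$ be the subgroup generated by $f_1=f_2=f_3=f_4$, $f_5$, $f_6$, where, for $Z=(z_1,z_2)$, $f_1(Z)=(-z_1,\lambda z_2)$, $f_5(Z)=(-z_1+z_2^2,\lambda z_2)$, $f_6(Z)=(-z_1+\lambda^2z_2^2,\lambda z_2)$. Then $f_1\circ f_2\circ f_3\circ f_4\circ f_5\circ f_6=\mathrm{Id}$, the maps $f_1,\ldots,f_6$ are pairwise conjugate in $G$ (so $G$ is irreducible with basic set of generators $f_1,\ldots,f_6$), $G$ is infinite, and $G$ is not abelian and not analytically linearizable.
   Context: $\mathrm{Diff}(\mathbb C^2,0)$ denotes the group of germs at $0$ of holomorphic diffeomorphisms of $\mathbb C^2$ fixing $0$. A subgroup $G$ is irreducible if it admits a finite set of generators $f_1,\ldots,f_{\nu+1}$ (repetitions allowed) with $f_1\circ\cdots\circ f_{\nu+1}=\mathrm{Id}$ and such that for all $i,j$ there is $h\in G$ with $f_i\circ h=h\circ f_j$. *)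

theory Defs
  imports "HOL-Analysis.Analysis"
begin

type_synonym C2 = "complex \<times> complex"

definition cmat :: "complex \<Rightarrow> complex \<Rightarrow> complex \<Rightarrow> complex \<Rightarrow> C2 \<Rightarrow> C2" where
  "cmat a b c d = (\<lambda>(u, v). (a * u + b * v, c * u + d * v))"

definition holo2 :: "(C2 \<Rightarrow> C2) \<Rightarrow> C2 set \<Rightarrow> bool" where
  "holo2 f U \<longleftrightarrow> open U \<and>
     (\<forall>z\<in>U. \<exists>a b c d. (f has_derivative cmat a b c d) (at z))"

inductive_set gen_group :: "(C2 \<Rightarrow> C2) set \<Rightarrow> (C2 \<Rightarrow> C2) set" for S where
  gen_id: "id \<in> gen_group S"
| gen_mul: "g \<in> gen_group S \<Longrightarrow> s \<in> S \<Longrightarrow> s \<circ> g \<in> gen_group S"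
| gen_inv: "g \<in> gen_group S \<Longrightarrow> s \<in> S \<Longrightarrow> inv s \<circ> g \<in> gen_group S"

definition irreducible_group :: "(C2 \<Rightarrow> C2) set \<Rightarrow> bool" where
  "irreducible_group G \<longleftrightarrow> (\<exists>fs. fs \<noteq> [] \<and> (\<forall>f\<in>set fs. bij f \<and> f 0 = 0) \<and>
      gen_group (set fs) = G \<and> foldr (\<circ>) fs id = id \<and>
      (\<forall>f\<in>set fs. \<forall>g\<in>set fs. \<exists>h\<in>G. f \<circ> h = h \<circ> g))"

definition analytically_linearizable :: "(C2 \<Rightarrow> C2) set \<Rightarrow> bool" where
  "analytically_linearizable G \<longleftrightarrow>
     (\<exists>U \<phi> \<psi>. open U \<and> 0 \<in> U \<and> \<phi> 0 = 0 \<and> holo2 \<phi> U \<and> inj_on \<phi> U \<and>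
        open (\<phi> ` U) \<and> holo2 \<psi> (\<phi> ` U) \<and> (\<forall>z\<in>U. \<psi> (\<phi> z) = z) \<and>
        (\<forall>g\<in>G. \<exists>a b c d. \<forall>\<^sub>F z in nhds 0. \<phi> (g z) = cmat a b c d (\<phi> z)))"

definition f1 :: "complex \<Rightarrow> C2 \<Rightarrow> C2" where
  "f1 l = (\<lambda>(z1, z2). (- z1, l * z2))"
definition f5 :: "complex \<Rightarrow> C2 \<Rightarrow> C2" where
  "f5 l = (\<lambda>(z1, z2). (- z1 + z2^2, l * z2))"
definition f6 :: "complex \<Rightarrow> C2 \<Rightarrow> C2" where
  "f6 l = (\<lambda>(z1, z2). (- z1 + l^2 * z2^2, l * z2))"

end

theory Submission
  imports Defs
begin

definition Tm :: "complex \<Rightarrow> C2 \<Rightarrow> C2" where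
  "Tm a = (\<lambda>(z1, z2). (z1 + a * z2^2, z2))"
definition Fm :: "complex \<Rightarrow> complex \<Rightarrow> C2 \<Rightarrow> C2" where
  "Fm l c = (\<lambda>(z1, z2). (- z1 + c * z2^2, l * z2))"

lemma l3: assumes "l^2 + l + 1 = (0::complex)" shows "l^3 = 1"
proof -
  have "l^3 - 1 = (l - 1) * (l^2 + l + 1)" by (simp add: algebra_simps power2_eq_square power3_eq_cube)
  thus ?thesis using assms by simp
qed

lemma l4: assumes "l^2 + l + 1 = (0::complex)" shows "l^4 = l" "l^6 = 1"
proof -
  have "l^4 = l * l^3" by (simp add: power_numeral_reduce)
  thus "l^4 = l" using l3[OF assms] by simp
  have "l^6 = (l^3)^2" by (simp flip: power_mult)
  thus "l^6 = 1" using l3[OF assms] by simp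
qed

lemma f1F: "f1 l = Fm l 0" by (auto simp: f1_def Fm_def)
lemma f5F: "f5 l = Fm l 1" by (auto simp: f5_def Fm_def)
lemma f6F: "f6 l = Fm l (l^2)" by (auto simp: f6_def Fm_def)

lemma Tm_comp: "Tm a \<circ> Tm b = Tm (a + b)"
  by (auto simp: Tm_def fun_eq_iff algebra_simps)
lemma Tm_0: "Tm 0 = id" by (auto simp: Tm_def fun_eq_iff)

lemma Fm_inv: assumes "l^2 + l + 1 = 0"
  shows "inv (Fm l c) = (\<lambda>(z1, z2). (- z1 + c * l^4 * z2^2, l^2 * z2))"
proof (rule inv_unique_comp)
  note L = l3[OF assms] l4[OF assms]
  show "Fm l c \<circ> (\<lambda>(z1, z2). (- z1 + c * l ^ 4 * z2\<^sup>2, l\<^sup>2 * z2)) = id"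
  proof -
    have "l * l^2 = l^3" by (simp add: power_numeral_reduce)
    moreover have "c * (l^2 * b)^2 = c * l^4 * b^2" for b by (simp add: power_mult_distrib flip: power_mult)
    ultimately show ?thesis using L by (auto simp: Fm_def fun_eq_iff mult.assoc)
  qed
  show "(\<lambda>(z1, z2). (- z1 + c * l ^ 4 * z2\<^sup>2, l\<^sup>2 * z2)) \<circ> Fm l c = id"
  proof -
    have "l^2 * l = l^3" by (simp add: power_numeral_reduce)
    moreover have "c * l^4 * (l * b)^2 = c * l^6 * b^2" for b
      by (simp add: power_mult_distrib power_add[symmetric] mult.assoc)
    ultimately show ?thesis using L by (auto simp: Fm_def fun_eq_iff mult.assoc)
  qed
qed

lemma Fm_bij: assumes "l^2 + l + 1 = 0"
  shows "bij (Fm l c)"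
proof (rule o_bij[where g="(\<lambda>(z1, z2). (- z1 + c * l^4 * z2^2, l^2 * z2))"])
  note L = l3[OF assms] l4[OF assms]
  show "Fm l c \<circ> (\<lambda>(z1, z2). (- z1 + c * l ^ 4 * z2\<^sup>2, l\<^sup>2 * z2)) = id"
  proof -
    have "l * l^2 = l^3" by (simp add: power_numeral_reduce)
    moreover have "c * (l^2 * b)^2 = c * l^4 * b^2" for b by (simp add: power_mult_distrib flip: power_mult)
    ultimately show ?thesis using L by (auto simp: Fm_def fun_eq_iff mult.assoc)
  qed
  show "(\<lambda>(z1, z2). (- z1 + c * l ^ 4 * z2\<^sup>2, l\<^sup>2 * z2)) \<circ> Fm l c = id"
  proof -
    have "l^2 * l = l^3" by (simp add: power_numeral_reduce)
    moreover have "c * l^4 * (l * b)^2 = c * l^6 * b^2" for b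
      by (simp add: power_mult_distrib power_add[symmetric] mult.assoc)
    ultimately show ?thesis using L by (auto simp: Fm_def fun_eq_iff mult.assoc)
  qed
qed

lemma Fm_inv_comp: assumes "l^2 + l + 1 = 0"
  shows "inv (Fm l c) \<circ> Fm l d = Tm (c - d)"
proof -
  have l6: "l^6 = 1" using l4[OF assms] by simp
  have "c * l^4 * (l * b)^2 = c * b^2" for b
  proof -
    have "c * l^4 * (l * b)^2 = c * l^6 * b^2" by (simp add: power_mult_distrib power_add[symmetric] mult.assoc)
    thus ?thesis using l6 by simp
  qed
  moreover have "l^2 * l = 1" using l3[OF assms] by (metis power_Suc2 numeral_3_eq_3 numeral_2_eq_2)
  ultimately show ?thesis unfolding Fm_inv[OF assms]
    by (auto simp: Fm_def Tm_def fun_eq_iff algebra_simps)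
qed

lemma Fm_conj: assumes "l^2 + l + 1 = 0" and "a = (d - c) * l^2"
  shows "Fm l c \<circ> Tm a = Tm a \<circ> Fm l d"
proof -
  have "a * (1 + l^2) = (d - c) * (l^2 + l^4)" using assms(2)
    by algebra
  also have "\<dots> = c - d" unfolding l4(1)[OF assms(1)]
  proof -
    have "l^2 + l = -1" using assms(1) by (metis add_eq_0_iff2 add.commute add.left_commute)
    thus "(d - c) * (l^2 + l) = c - d" by simp
  qed
  finally have e: "- a + c = d + a * l^2" by (simp add: algebra_simps)
  show ?thesis
  proof (rule ext, clarify)
    fix z1 z2
    have "- (z1 + a * z2^2) + c * z2^2 = - z1 + d * z2^2 + a * (l * z2)^2"
      using e by (simp add: algebra_simps power_mult_distrib)
    thus "(Fm l c \<circ> Tm a) (z1, z2) = (Tm a \<circ> Fm l d) (z1, z2)"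
      by (simp add: Fm_def Tm_def)
  qed
qed

lemma gen_comp: "g \<in> gen_group S \<Longrightarrow> h \<in> gen_group S \<Longrightarrow> g \<circ> h \<in> gen_group S"
proof (induction rule: gen_group.induct)
  case gen_id thus ?case by simp
next
  case (gen_mul g s) thus ?case by (metis comp_assoc gen_group.gen_mul)
next
  case (gen_inv g s) thus ?case by (metis comp_assoc gen_group.gen_inv)
qed

lemma cmat_alt: "cmat a b c d = (\<lambda>z. (a * fst z + b * snd z, c * fst z + d * snd z))"
  by (auto simp: cmat_def fun_eq_iff)

lemma cmat_deriv: "(cmat a b c d has_derivative cmat a b c d) (at x)"
  unfolding cmat_alt
  by (rule derivative_eq_intros refl)+

lemma Tm_deriv: "(Tm a has_derivative id) (at 0)"
proof -
  have "Tm a = (\<lambda>z. (fst z + a * (snd z)^2, snd z))" by (auto simp: Tm_def fun_eq_iff)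
  moreover have "((\<lambda>z. (fst z + a * (snd z)^2, snd z)) has_derivative (\<lambda>h. (fst h + a * (of_nat 2 * (snd (0::C2))^(2-1) * snd h), snd h))) (at 0)"
    by (rule derivative_eq_intros refl)+ simp
  moreover have "(\<lambda>h::C2. (fst h + a * (of_nat 2 * (snd (0::C2))^(2-1) * snd h), snd h)) = id"
    by (auto simp: fun_eq_iff)
  ultimately show ?thesis by simp
qed

lemma cmat_eq:
  assumes "cmat a b c d = cmat a' b' c' d'"
  shows "a = a' \<and> b = b' \<and> c = c' \<and> d = d'"
proof -
  have "cmat a b c d (1,0) = cmat a' b' c' d' (1,0)" "cmat a b c d (0,1) = cmat a' b' c' d' (0,1)"
    using assms by auto
  thus ?thesis by (simp add: cmat_def)
qed

lemma cmat_comp: "cmat x1 x2 x3 x4 \<circ> cmat y1 y2 y3 y4 = cmat (x1*y1 + x2*y3) (x1*y2 + x2*y4) (x3*y1 + x4*y3) (x3*y2 + x4*y4)"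
  by (auto simp: cmat_def fun_eq_iff algebra_simps)

lemma cmat_id: "id = cmat 1 0 0 1" by (auto simp: cmat_def fun_eq_iff)

lemma not_lin:
  assumes T: "Tm t \<in> G" and t: "t \<noteq> 0"
  shows "\<not> analytically_linearizable G"
proof
  assume "analytically_linearizable G"
  then obtain U \<phi> \<psi> where U: "open U" "0 \<in> U" and p0: "\<phi> 0 = 0" and hp: "holo2 \<phi> U"
    and inj: "inj_on \<phi> U" and hq: "holo2 \<psi> (\<phi> ` U)" and inv: "\<forall>z\<in>U. \<psi> (\<phi> z) = z"
    and lin: "\<forall>g\<in>G. \<exists>a b c d. \<forall>\<^sub>F z in nhds 0. \<phi> (g z) = cmat a b c d (\<phi> z)"
    unfolding analytically_linearizable_def by blast
  obtain a b c d where ev: "\<forall>\<^sub>F z in nhds 0. \<phi> (Tm t z) = cmat a b c d (\<phi> z)"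
    using lin T by blast
  obtain p1 p2 p3 p4 where dp: "(\<phi> has_derivative cmat p1 p2 p3 p4) (at 0)"
    using hp U unfolding holo2_def by blast
  have "\<phi> 0 \<in> \<phi> ` U" using U by blast
  then obtain q1 q2 q3 q4 where dq: "(\<psi> has_derivative cmat q1 q2 q3 q4) (at (\<phi> 0))"
    using hq unfolding holo2_def by blast
  have "((\<psi> \<circ> \<phi>) has_derivative cmat q1 q2 q3 q4 \<circ> cmat p1 p2 p3 p4) (at 0)"
    by (rule diff_chain_at[OF dp dq])
  moreover have "((\<psi> \<circ> \<phi>) has_derivative id) (at 0)"
    by (rule has_derivative_transform_within_open[OF has_derivative_id U]) (use inv in auto)
  ultimately have e1: "cmat q1 q2 q3 q4 \<circ> cmat p1 p2 p3 p4 = cmat 1 0 0 1"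
    using has_derivative_unique cmat_id by metis
  have T0: "Tm t 0 = 0" by (simp add: Tm_def zero_prod_def)
  have dp': "(\<phi> has_derivative cmat p1 p2 p3 p4) (at (Tm t 0))" using dp T0 by simp
  have d1: "((\<phi> \<circ> Tm t) has_derivative cmat p1 p2 p3 p4 \<circ> id) (at 0)"
    by (rule diff_chain_at[OF Tm_deriv dp'])
  obtain S where S: "open S" "0 \<in> S" "\<forall>z\<in>S. \<phi> (Tm t z) = cmat a b c d (\<phi> z)"
    using ev unfolding eventually_nhds by blast
  have d2: "((cmat a b c d \<circ> \<phi>) has_derivative cmat a b c d \<circ> cmat p1 p2 p3 p4) (at 0)"
    by (rule diff_chain_at[OF dp cmat_deriv])
  have d1': "((cmat a b c d \<circ> \<phi>) has_derivative cmat p1 p2 p3 p4 \<circ> id) (at 0)"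
    by (rule has_derivative_transform_within_open[OF d1 S(1,2)]) (use S(3) in auto)
  have e2: "cmat a b c d \<circ> cmat p1 p2 p3 p4 = cmat p1 p2 p3 p4"
    using has_derivative_unique[OF d1' d2] by simp
  note E1 = cmat_eq[OF e1[unfolded cmat_comp]]
  note E2 = cmat_eq[OF e2[unfolded cmat_comp]]
  have det: "(q1*q4 - q2*q3) * (p1*p4 - p2*p3) = 1" using E1 by algebra
  hence dn: "p1*p4 - p2*p3 \<noteq> 0" by auto
  have "(p1*p4 - p2*p3) * (a - 1) = p4*(a*p1+b*p3-p1) - p3*(a*p2+b*p4-p2)" by (simp add: algebra_simps)
  hence a1: "a = 1" using dn E2 by simp
  have "(p1*p4 - p2*p3) * b = p1*(a*p2+b*p4-p2) - p2*(a*p1+b*p3-p1)" by (simp add: algebra_simps)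
  hence b0: "b = 0" using dn E2 by simp
  have "(p1*p4 - p2*p3) * c = p4*(c*p1+d*p3-p3) - p3*(c*p2+d*p4-p4)" by (simp add: algebra_simps)
  hence c0: "c = 0" using dn E2 by simp
  have "(p1*p4 - p2*p3) * (d - 1) = p1*(c*p2+d*p4-p4) - p2*(c*p1+d*p3-p3)" by (simp add: algebra_simps)
  hence d1: "d = 1" using dn E2 by simp
  have M: "cmat a b c d = id" using a1 b0 c0 d1 cmat_id by simp
  have cT: "continuous_on UNIV (Tm t)"
    unfolding Tm_def case_prod_unfold by (intro continuous_intros)
  have "\<forall>\<^sub>F z in nhds 0. Tm t z \<in> U"
  proof -
    have "(Tm t \<longlongrightarrow> Tm t 0) (at 0)" using cT unfolding continuous_on_def by blast
    hence "\<forall>\<^sub>F z in at 0. Tm t z \<in> U" using U T0 by (simp add: tendsto_def)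
    thus ?thesis using U T0 by (simp add: eventually_nhds_conv_at)
  qed
  moreover have "\<forall>\<^sub>F z in nhds 0. z \<in> U" using U by (rule eventually_nhds_in_open)
  ultimately have "\<forall>\<^sub>F z in nhds 0. Tm t z = z"
    using ev proof eventually_elim
    case (elim z) thus ?case using M inj by (auto simp: inj_on_def)
  qed
  then obtain e where e: "e > 0" "\<forall>z. dist z 0 < e \<longrightarrow> Tm t z = z"
    unfolding eventually_nhds_metric by blast
  define z :: C2 where "z = (0, of_real (e/2))"
  have "dist z 0 < e" using e by (simp add: z_def dist_norm zero_prod_def norm_Pair)
  hence "Tm t z = z" using e by blast
  moreover have "Tm t z \<noteq> z" using t e by (simp add: z_def Tm_def)
  ultimately show False by simp
qed

lemma Tm_nat: "Tm b \<in> gen_group S \<Longrightarrow> Tm (of_nat n * b) \<in> gen_group S"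
proof (induction n)
  case 0 thus ?case using Tm_0 gen_group.gen_id by (metis mult_zero_left of_nat_0)
next
  case (Suc n)
  have "Tm (of_nat (Suc n) * b) = Tm b \<circ> Tm (of_nat n * b)" by (simp add: Tm_comp algebra_simps)
  thus ?case using Suc gen_comp by metis
qed

lemma Tm_int: assumes "Tm b \<in> gen_group S" "Tm (-b) \<in> gen_group S"
  shows "Tm (of_int k * b) \<in> gen_group S"
proof (cases "k \<ge> 0")
  case True
  hence "of_int k * b = of_nat (nat k) * b" by simp
  thus ?thesis using Tm_nat[of b S "nat k"] assms by metis
next
  case False
  hence "of_int k * b = of_nat (nat (-k)) * (-b)" by simp
  thus ?thesis using Tm_nat[of "-b" S "nat (-k)"] assms by metis
qed

lemma Tm_mem:
  assumes l: "l^2 + l + 1 = 0" and S: "Fm l 0 \<in> S" "Fm l 1 \<in> S" "Fm l (l^2) \<in> S"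
  shows "Tm (of_int m + of_int n * l^2) \<in> gen_group S"
proof -
  have g: "inv s \<circ> (s' \<circ> id) \<in> gen_group S" if "s \<in> S" "s' \<in> S" for s s'
    by (intro gen_group.intros that)
  have "Tm (0 - 1) \<in> gen_group S" using g[OF S(1) S(2)] Fm_inv_comp[OF l] by simp
  moreover have "Tm (1 - 0) \<in> gen_group S" using g[OF S(2) S(1)] Fm_inv_comp[OF l] by simp
  moreover have "Tm (0 - l^2) \<in> gen_group S" using g[OF S(1) S(3)] Fm_inv_comp[OF l] by simp
  moreover have "Tm (l^2 - 0) \<in> gen_group S" using g[OF S(3) S(1)] Fm_inv_comp[OF l] by simp
  ultimately have "Tm (of_int m * 1) \<in> gen_group S" "Tm (of_int n * l^2) \<in> gen_group S"
    using Tm_int[of 1 S m] Tm_int[of "l^2" S n] by simp_all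
  hence "Tm (of_int m * 1) \<circ> Tm (of_int n * l^2) \<in> gen_group S" by (rule gen_comp)
  thus ?thesis by (simp add: Tm_comp)
qed

lemma Tm_mem2:
  assumes l: "l^2 + l + 1 = 0" and S: "Fm l 0 \<in> S" "Fm l 1 \<in> S" "Fm l (l^2) \<in> S"
  shows "Tm ((of_int a + of_int b * l^2) * l^2) \<in> gen_group S"
proof -
  have "l^2 * l^2 = l^4" by (simp flip: power_add)
  hence e1: "(of_int a + of_int b * l^2) * l^2 = of_int a * l^2 + of_int b * l"
    using l4(1)[OF l] by (simp add: algebra_simps)
  have e2: "of_int a * l^2 + of_int b * l = of_int (-b) + of_int (a - b) * l^2"
  proof -
    have "\<And>x y::complex. x * l^2 + y * l = - y + (x - y) * l^2" using l by algebra
    thus ?thesis by simp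
  qed
  show ?thesis using Tm_mem[OF l S, of "-b" "a-b"] e1 e2 by simp
qed

lemma repr: "c \<in> {0, 1, l^2} \<Longrightarrow> \<exists>a b. c = of_int a + of_int b * (l::complex)^2"
  by (auto intro: exI[of _ 0] exI[of _ 1])

lemma prodA: assumes l: "l^2 + l + 1 = 0"
  shows "Fm l 0 \<circ> (Fm l 0 \<circ> (Fm l 0 \<circ> (Fm l 0 \<circ> (Fm l 1 \<circ> Fm l (l^2))))) = id"
proof (rule ext, clarify)
  fix z1 z2
  have "l^6 = 1" using l4[OF l] by simp
  hence "l * (l * (l * (l * (l * l)))) = 1" by (simp add: power_numeral_reduce)
  thus "(Fm l 0 \<circ> (Fm l 0 \<circ> (Fm l 0 \<circ> (Fm l 0 \<circ> (Fm l 1 \<circ> Fm l (l^2)))))) (z1, z2) = id (z1, z2)"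
    by (simp add: Fm_def power_mult_distrib algebra_simps)
qed


theorem mainTheorem7:
  fixes l :: complex and fs :: "(C2 \<Rightarrow> C2) list" and G :: "(C2 \<Rightarrow> C2) set"
  assumes "l^2 + l + 1 = 0"
    and "fs = [f1 l, f1 l, f1 l, f1 l, f5 l, f6 l]"
    and "G = gen_group (set fs)"
  shows "f1 l \<circ> f1 l \<circ> f1 l \<circ> f1 l \<circ> f5 l \<circ> f6 l = id
    \<and> (\<forall>i<6. \<forall>j<6. \<exists>h\<in>G. fs ! i \<circ> h = h \<circ> fs ! j)
    \<and> irreducible_group G
    \<and> infinite G
    \<and> (\<exists>g\<in>G. \<exists>h\<in>G. g \<circ> h \<noteq> h \<circ> g)
    \<and> \<not> analytically_linearizable G"
proof -
  note l = assms(1)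
  have sF: "set fs = {Fm l 0, Fm l 1, Fm l (l^2)}" using assms(2) by (auto simp: f1F f5F f6F)
  have S: "Fm l 0 \<in> set fs" "Fm l 1 \<in> set fs" "Fm l (l^2) \<in> set fs" using sF by auto
  have TG: "Tm (of_int m + of_int n * l^2) \<in> G" for m n
    using Tm_mem[OF l S] assms(3) by simp
  have A: "f1 l \<circ> f1 l \<circ> f1 l \<circ> f1 l \<circ> f5 l \<circ> f6 l = id"
    using prodA[OF l] by (simp add: f1F f5F f6F comp_assoc)
  have conj: "\<forall>f\<in>set fs. \<forall>g\<in>set fs. \<exists>h\<in>G. f \<circ> h = h \<circ> g"
  proof (intro ballI)
    fix f g assume "f \<in> set fs" "g \<in> set fs"
    then obtain c d where cd: "f = Fm l c" "g = Fm l d" "c \<in> {0, 1, l^2}" "d \<in> {0, 1, l^2}"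
      using sF by auto
    obtain a b where ab: "c = of_int a + of_int b * l^2" using repr[OF cd(3)] by blast
    obtain a' b' where ab': "d = of_int a' + of_int b' * l^2" using repr[OF cd(4)] by blast
    have "d - c = of_int (a' - a) + of_int (b' - b) * l^2" using ab ab' by (simp add: algebra_simps)
    hence "Tm ((d - c) * l^2) \<in> G" using Tm_mem2[OF l S, of "a' - a" "b' - b"] assms(3) by metis
    moreover have "f \<circ> Tm ((d - c) * l^2) = Tm ((d - c) * l^2) \<circ> g"
      using Fm_conj[OF l refl] cd by simp
    ultimately show "\<exists>h\<in>G. f \<circ> h = h \<circ> g" by blast
  qed
  have B: "\<forall>i<6. \<forall>j<6. \<exists>h\<in>G. fs ! i \<circ> h = h \<circ> fs ! j"
  proof (intro allI impI)
    fix i j :: nat assume "i < 6" "j < 6"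
    hence "fs ! i \<in> set fs" "fs ! j \<in> set fs" using assms(2) by (simp_all add: nth_mem del: set_simps)
    thus "\<exists>h\<in>G. fs ! i \<circ> h = h \<circ> fs ! j" using conj by blast
  qed
  have C: "irreducible_group G"
    unfolding irreducible_group_def
  proof (intro exI[of _ fs] conjI)
    show "fs \<noteq> []" using assms(2) by simp
    have "Fm l c 0 = 0" for c by (simp add: Fm_def zero_prod_def)
    thus "\<forall>f\<in>set fs. bij f \<and> f 0 = 0" using sF Fm_bij[OF l] by auto
    show "gen_group (set fs) = G" using assms(3) by simp
    show "foldr (\<circ>) fs id = id" using prodA[OF l] assms(2) by (simp add: f1F f5F f6F)
    show "\<forall>f\<in>set fs. \<forall>g\<in>set fs. \<exists>h\<in>G. f \<circ> h = h \<circ> g" by (rule conj)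
  qed
  have D: "infinite G"
  proof -
    have "inj (\<lambda>n::nat. Tm (of_nat n))"
    proof (rule injI)
      fix m n :: nat assume "Tm (of_nat m) = Tm (of_nat n)"
      hence "Tm (of_nat m) (0, 1) = Tm (of_nat n) (0, 1)" by simp
      thus "m = n" by (simp add: Tm_def)
    qed
    hence "infinite (range (\<lambda>n::nat. Tm (of_nat n)))" by (rule range_inj_infinite)
    moreover have "range (\<lambda>n::nat. Tm (of_nat n)) \<subseteq> G"
      using TG[of _ 0] by (auto, metis of_int_of_nat_eq)
    ultimately show ?thesis using infinite_super by blast
  qed
  have Tm1: "Tm (-1) \<in> G" using TG[of "-1" 0] by simp
  have F0: "Fm l 0 \<in> G" using assms(3) S(1) gen_group.gen_mul[OF gen_group.gen_id, of "Fm l 0" "set fs"] by simp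
  have NC: "Fm l 0 \<circ> Tm (-1) \<noteq> Tm (-1) \<circ> Fm l 0"
  proof
    assume "Fm l 0 \<circ> Tm (-1) = Tm (-1) \<circ> Fm l 0"
    hence "(Fm l 0 \<circ> Tm (-1)) (0,1) = (Tm (-1) \<circ> Fm l 0) (0,1)" by simp
    hence "(1::complex) = - (l^2)" by (simp add: Fm_def Tm_def)
    hence "l = 0" using l by algebra
    thus False using l by simp
  qed
  have E: "\<exists>g\<in>G. \<exists>h\<in>G. g \<circ> h \<noteq> h \<circ> g" using F0 Tm1 NC by blast
  have F: "\<not> analytically_linearizable G" by (rule not_lin[OF Tm1]) simp
  show ?thesis using A B C D E F by blast
qed

end
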